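(* For every integer $n\ge 0$, $$\Phi^{(1)}[a; bq^n, b'; c; x, y] = \sum_{k=0}^n \begin{bmatrix} n \\ k \end{bmatrix} q^{2\binom{k}{2}} \frac{(bx)^k (a; q)_k}{(c; q)_k} \Phi^{(1)}[aq^k; bq^k, b'; cq^k; x, y]$$ and $$\Phi^{(1)}[a; bq^{-n}, b'; c; x, y] = \sum_{k=0}^n \begin{bmatrix} n \\ k \end{bmatrix} q^{\binom{k}{2} - nk} \frac{(-bx)^k (a; q)_k}{(c; q)_k} \Phi^{(1)}[aq^k; b, b'; cq^k; x, y].$$
   Context: Let $q$ be a complex number with $0<|q|<1$. For complex $z$ and integer $m\ge 0$, $(z;q)_m=\prod_{j=0}^{m-1}(1-zq^j)$, with $(z;q)_0=1$. For integers $0\le k\le n$, $\begin{bmatrix} n \\ k \end{bmatrix}=\frac{(q;q)_n}{(q;q)_k(q;q)_{n-k}}$ is the $q$-binomial coefficient. The $q$-Appell function $\Phi^{(1)}$ is $$\Phi^{(1)}[a; b, b'; c; x, y] = \sum_{m, n \geq 0} \frac{(a; q)_{m+n} (b; q)_m (b'; q)_n}{(q; q)_m (q; q)_n (c; q)_{m+n}} x^m y^n.$$ Identities are understood as identities of power series in $x,y$ (formal, or convergent for small $|x|,|y|$), with complex parameters chosen so that no denominator occurring vanishes. *)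

theory Defs
  imports "HOL-Computational_Algebra.Formal_Power_Series"
begin

definition qpoch :: "complex \<Rightarrow> complex \<Rightarrow> nat \<Rightarrow> complex" where
  "qpoch z q m = (\<Prod>j<m. 1 - z * q ^ j)"

definition qbinom :: "complex \<Rightarrow> nat \<Rightarrow> nat \<Rightarrow> complex" where
  "qbinom q n k = qpoch q q n / (qpoch q q k * qpoch q q (n - k))"

text \<open>The q-Appell function Phi^(1) as a formal power series in two variables x, y:
  an element of (complex fps) fps; the outer variable is x, the inner one is y,
  so the coefficient of x^m y^n is the (m,n) term.\<close>
definition qAppell1 ::
  "complex \<Rightarrow> complex \<Rightarrow> complex \<Rightarrow> complex \<Rightarrow> complex \<Rightarrow> complex fps fps" where
  "qAppell1 q a b b' c = Abs_fps (\<lambda>m. Abs_fps (\<lambda>n.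
      qpoch a q (m + n) * qpoch b q m * qpoch b' q n /
      (qpoch q q m * qpoch q q n * qpoch c q (m + n))))"

abbreviation fpsX :: "complex fps fps" where "fpsX \<equiv> fps_X"
abbreviation cst :: "complex \<Rightarrow> complex fps fps" where "cst z \<equiv> fps_const (fps_const z)"

end

theory Submission
  imports Defs
begin

lemma qpoch_0[simp]: "qpoch z q 0 = 1" by (simp add: qpoch_def)
lemma qpoch_Suc: "qpoch z q (Suc m) = qpoch z q m * (1 - z*q^m)"
  by (simp add: qpoch_def)
lemma qpoch_add: "qpoch z q (k+j) = qpoch z q k * qpoch (z*q^k) q j"
  by (induction j) (auto simp: qpoch_Suc power_add mult_ac)
lemma qpoch_Suc': "qpoch z q (Suc m) = (1-z) * qpoch (z*q) q m"
  using qpoch_add[of z q 1 m] by (simp add: qpoch_def)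

lemma qqpoch_nz:
  fixes q :: complex
  assumes "norm q < 1" shows "qpoch q q m \<noteq> 0"
proof -
  have "1 - q * q ^ j \<noteq> 0" for j
  proof
    assume "1 - q * q ^ j = 0"
    hence "q ^ Suc j = 1" by simp
    hence "norm q ^ Suc j = 1" by (metis norm_one norm_power)
    moreover have "norm q ^ Suc j < 1" using assms
    proof -
      have "norm q * norm q ^ j \<le> norm q * 1"
        using assms by (intro mult_left_mono power_le_one) auto
      thus ?thesis using assms by simp
    qed
    ultimately show False by simp
  qed
  thus ?thesis by (simp add: qpoch_def)
qed

definition G :: "complex \<Rightarrow> complex \<Rightarrow> nat \<Rightarrow> complex" where
  "G q b m = qpoch b q m / qpoch q q m"
definition FF :: "complex \<Rightarrow> complex \<Rightarrow> complex fps" where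
  "FF q b = Abs_fps (G q b)"
definition Pn :: "complex \<Rightarrow> complex \<Rightarrow> nat \<Rightarrow> complex fps" where
  "Pn q z n = (\<Prod>j<n. 1 - fps_const (z*q^j) * fps_X)"
lemma FF_nth[simp]: "fps_nth (FF q b) m = G q b m" by (simp add: FF_def)

definition qb :: "complex \<Rightarrow> nat \<Rightarrow> nat \<Rightarrow> complex" where
  "qb q n k = (if k \<le> n then qbinom q n k else 0)"

lemma L1:
  assumes qnz: "\<And>m. qpoch q q m \<noteq> 0"
  shows "FF q b = (1 - fps_const b * fps_X) * FF q (b*q)"
proof (rule fps_ext)
  fix m
  show "fps_nth (FF q b) m = fps_nth ((1 - fps_const b * fps_X) * FF q (b*q)) m"
  proof (cases m)
    case 0 thus ?thesis by (simp add: FF_def G_def algebra_simps)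
  next
    case (Suc k)
    have e: "(1 - fps_const b * fps_X) * FF q (b*q) = FF q (b*q) - fps_const b * (fps_X * FF q (b*q))"
      by (simp add: algebra_simps)
    have n1: "qpoch q q k \<noteq> 0" and n2: "1 - q * q^k \<noteq> 0"
      using qnz[of k] qnz[of "Suc k"] by (auto simp: qpoch_Suc)
    have "G q b (Suc k) = G q (b*q) (Suc k) - b * G q (b*q) k"
      unfolding G_def qpoch_Suc'[of b] qpoch_Suc[of "b*q"] qpoch_Suc[of q q k]
      using n1 n2 by (simp add: field_simps)
    thus ?thesis unfolding e Suc by (simp add: FF_def fps_X_mult_nth)
  qed
qed

lemma Pn_Suc: "Pn q z (Suc n) = Pn q z n * (1 - fps_const (z*q^n) * fps_X)"
  by (simp add: Pn_def)
lemma Pn_Suc': "Pn q z (Suc n) = (1 - fps_const z * fps_X) * Pn q (z*q) n"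
  unfolding Pn_def prod.lessThan_Suc_shift by (simp add: mult_ac)

lemma L2:
  assumes qnz: "\<And>m. qpoch q q m \<noteq> 0"
  shows "FF q b = Pn q b n * FF q (b*q^n)"
proof (induction n arbitrary: b)
  case 0 thus ?case by (simp add: Pn_def)
next
  case (Suc n)
  have "FF q b = (1 - fps_const b * fps_X) * FF q (b*q)" by (rule L1[OF qnz])
  also have "\<dots> = (1 - fps_const b * fps_X) * (Pn q (b*q) n * FF q (b*q*q^n))"
    by (simp only: Suc.IH[of "b*q"])
  also have "\<dots> = Pn q b (Suc n) * FF q (b*q^Suc n)"
    by (simp add: Pn_Suc' mult_ac)
  finally show ?case .
qed

lemma qb_0: "qpoch q q n \<noteq> 0 \<Longrightarrow> qb q n 0 = 1" by (simp add: qb_def qbinom_def)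
lemma qb_gt: "n < k \<Longrightarrow> qb q n k = 0" by (simp add: qb_def)

lemma qb_Pascal:
  assumes qnz: "\<And>m. qpoch q q m \<noteq> 0"
  shows "qb q (Suc n) (Suc k) = qb q n (Suc k) + q^(n-k) * qb q n k"
proof (cases "n < k")
  case True thus ?thesis by (simp add: qb_def)
next
  case False
  show ?thesis
  proof (cases "k = n")
    case True
    thus ?thesis using qnz[of "Suc n"] qnz[of n] by (simp add: qb_def qbinom_def)
  next
    case False
    with \<open>\<not> n < k\<close> obtain d where n: "n = k + Suc d" by (metis add_Suc_right le_less less_imp_Suc_add not_less)
    have a1: "qpoch q q k \<noteq> 0" and a2: "1 - q*q^k \<noteq> 0" and a3: "qpoch q q d \<noteq> 0"
      and a4: "1 - q*q^d \<noteq> 0" and a5: "qpoch q q n \<noteq> 0"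
      using qnz[of k] qnz[of "Suc k"] qnz[of d] qnz[of "Suc d"] qnz[of n] by (auto simp: qpoch_Suc)
    have e1: "Suc n - Suc k = Suc d" "n - Suc k = d" "n - k = Suc d" using n by auto
    have e2: "q^n = q^k * q^Suc d" using n by (simp add: power_add)
    have le: "Suc k \<le> n" "k \<le> n" using n by auto
    have aux0: "\<And>A K D w1 w2 :: complex. K\<noteq>0 \<Longrightarrow> D\<noteq>0 \<Longrightarrow> w1\<noteq>0 \<Longrightarrow> w2\<noteq>0 \<Longrightarrow>
       A*(1-(1-w1)*(1-w2))/(K*w1*(D*w2)) = A/(K*w1*D) + (1-w2)*(A/(K*(D*w2)))"
      by (simp add: field_simps)
    have aux: "A*(1-u*v)/(K*(1-u)*(D*(1-v))) = A/(K*(1-u)*D) + v*(A/(K*(D*(1-v))))"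
      if "K\<noteq>0" "D\<noteq>0" "1-u\<noteq>0" "1-v\<noteq>0" for A K D u v :: complex
      using aux0[OF that, of A] by simp
    have key: "qpoch q q (Suc n) / (qpoch q q (Suc k) * qpoch q q (Suc d)) =
      qpoch q q n / (qpoch q q (Suc k) * qpoch q q d) + q^(Suc d) * (qpoch q q n / (qpoch q q k * qpoch q q (Suc d)))"
      unfolding qpoch_Suc using aux[OF a1 a3 a2 a4, of "qpoch q q n"]
      by (simp add: e2 mult_ac)
    show ?thesis unfolding qb_def qbinom_def using le key
      by (simp add: e1)
  qed
qed


lemma fps_nth_1mcX: "fps_nth ((f::complex fps) * (1 - fps_const c * fps_X)) (Suc j) = fps_nth f (Suc j) - c * fps_nth f j"
proof -
  have "f * (1 - fps_const c * fps_X) = f - fps_const c * (fps_X * f)" by (simp add: algebra_simps)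
  thus ?thesis by simp
qed

lemma alg1:
  fixes u v e Q1 Q0 z qn :: complex
  assumes "e*v*Q1 = qn*v*Q0"
  shows "u*Q1*(-z)^Suc j - z*qn*(v*Q0*(-z)^j) = (u + e*v)*Q1*(-z)^Suc j"
proof -
  have "(u + e*v)*Q1*(-z)^Suc j = u*Q1*(-z)^Suc j + (e*v*Q1)*(-z)^Suc j" by (simp only: distrib_right)
  also have "\<dots> = u*Q1*(-z)^Suc j + (qn*v*Q0)*(-z)^Suc j" by (simp only: assms)
  also have "\<dots> = u*Q1*(-z)^Suc j - z*qn*(v*Q0*(-z)^j)" by (simp add: algebra_simps)
  finally show ?thesis by (rule sym)
qed

lemma qbinomial:
  assumes qnz: "\<And>m. qpoch q q m \<noteq> 0"
  shows "Pn q z n = Abs_fps (\<lambda>k. qb q n k * q^(k choose 2) * (-z)^k)"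
proof (induction n)
  case 0
  show ?case
  proof (rule fps_ext)
    fix k show "fps_nth (Pn q z 0) k = fps_nth (Abs_fps (\<lambda>k. qb q 0 k * q^(k choose 2) * (-z)^k)) k"
      by (cases k) (auto simp: Pn_def qb_def qbinom_def binomial_eq_0)
  qed
next
  case (Suc n)
  note IH = Suc.IH
  show ?case
  proof (rule fps_ext)
    fix k
    show "fps_nth (Pn q z (Suc n)) k = fps_nth (Abs_fps (\<lambda>k. qb q (Suc n) k * q^(k choose 2) * (-z)^k)) k"
    proof (cases k)
      case 0 thus ?thesis by (simp add: Pn_Suc Suc.IH qb_0[OF qnz])
    next
      case (Suc j)
      have c: "Suc j choose 2 = (j choose 2) + j" by (simp add: numeral_2_eq_2)
      have hh: "q^(n-j) * qb q n j * q^((j choose 2) + j) = q^n * qb q n j * q^(j choose 2)"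
      proof (cases "j \<le> n")
        case True
        hence h: "q^(n-j) * q^j = q^n" by (simp add: power_add[symmetric])
        have "q^(n-j) * qb q n j * q^((j choose 2) + j) = (q^(n-j) * q^j) * (qb q n j * q^(j choose 2))"
          by (simp only: power_add mult_ac)
        also have "\<dots> = q^n * (qb q n j * q^(j choose 2))" unfolding h ..
        finally show ?thesis by (simp add: mult_ac)
      next
        case False thus ?thesis by (simp add: qb_gt)
      qed
      have "fps_nth (Pn q z (Suc n)) k = qb q n (Suc j) * q^(Suc j choose 2) * (-z)^(Suc j) - z*q^n * (qb q n j * q^(j choose 2) * (-z)^j)"
        unfolding Pn_Suc \<open>k = Suc j\<close> fps_nth_1mcX IH by (simp only: fps_nth_Abs_fps)
      also have "\<dots> = (qb q n (Suc j) + q^(n-j) * qb q n j) * q^(Suc j choose 2) * (-z)^(Suc j)"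
        by (rule alg1) (simp only: c hh)
      also have "\<dots> = fps_nth (Abs_fps (\<lambda>k. qb q (Suc n) k * q^(k choose 2) * (-z)^k)) k"
        by (simp only: \<open>k = Suc j\<close> qb_Pascal[OF qnz] fps_nth_Abs_fps)
      finally show ?thesis .
    qed
  qed
qed


definition T :: "complex \<Rightarrow> nat \<Rightarrow> complex \<Rightarrow> complex fps" where
  "T q n b = (\<Sum>k\<le>n. fps_const (qb q n k * q^(2*(k choose 2)) * b^k) * fps_X^k * Pn q (b*q^k) (n-k))"

lemma T_one:
  assumes qnz: "\<And>m. qpoch q q m \<noteq> 0"
  shows "T q n b = 1"
proof (induction n arbitrary: b)
  case 0 thus ?case using qnz by (simp add: T_def qb_0 Pn_def binomial_eq_0)
next
  case (Suc n)
  define c where "c = b * q^n"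
  define f where "f k = fps_const (qb q (Suc n) k * q^(2*(k choose 2)) * b^k) * fps_X^k * Pn q (b*q^k) (Suc n-k)" for k
  define g where "g k = fps_const (qb q n k * q^(2*(k choose 2)) * b^k) * fps_X^k * Pn q (b*q^k) (Suc n-k)" for k
  define h where "h j = fps_const c * fps_X * (fps_const (qb q n j * q^(2*(j choose 2)) * (b*q)^j) * fps_X^j * Pn q ((b*q)*q^j) (n-j))" for j
  have f0: "f 0 = g 0" using qnz by (simp add: f_def g_def qb_0)
  have fS: "f (Suc j) = g (Suc j) + h j" if "j \<le> n" for j
  proof -
    have ch: "Suc j choose 2 = (j choose 2) + j" by (simp add: numeral_2_eq_2)
    have pw: "q^(n-j) * q^(2*(j choose 2) + 2*j) = q^n * q^(2*(j choose 2)) * q^j"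
    proof -
      have h: "q^(n-j) * q^j = q^n" using that by (simp add: power_add[symmetric])
      have "q^(n-j) * q^(2*(j choose 2) + 2*j) = (q^(n-j) * q^j) * q^(2*(j choose 2)) * q^j"
        unfolding mult_2 power_add by (simp only: mult_ac)
      also have "\<dots> = q^n * q^(2*(j choose 2)) * q^j" unfolding h ..
      finally show ?thesis .
    qed
    have sc: "q^(n-j) * qb q n j * q^(2*(Suc j choose 2)) * b^(Suc j) = c * (qb q n j * q^(2*(j choose 2)) * (b*q)^j)"
    proof -
      have "q^(n-j) * qb q n j * q^(2*(Suc j choose 2)) * b^(Suc j) = qb q n j * b^(Suc j) * (q^(n-j) * q^(2*(j choose 2) + 2*j))"
        unfolding ch by (simp add: mult_ac add_mult_distrib2)
      also have "\<dots> = qb q n j * b^(Suc j) * (q^n * q^(2*(j choose 2)) * q^j)" unfolding pw ..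
      also have "\<dots> = c * (qb q n j * q^(2*(j choose 2)) * (b*q)^j)" unfolding c_def by (simp add: power_mult_distrib mult_ac)
      finally show ?thesis .
    qed
    have "f (Suc j) = fps_const ((qb q n (Suc j) + q^(n-j) * qb q n j) * q^(2*(Suc j choose 2)) * b^(Suc j)) * fps_X^(Suc j) * Pn q (b*q^Suc j) (n-j)"
      by (simp add: f_def qb_Pascal[OF qnz])
    also have "\<dots> = g (Suc j) + fps_const (q^(n-j) * qb q n j * q^(2*(Suc j choose 2)) * b^(Suc j)) * fps_X^(Suc j) * Pn q (b*q^Suc j) (n-j)"
      by (simp add: g_def distrib_right fps_const_add[symmetric] del: fps_const_add)
    also have "fps_const (q^(n-j) * qb q n j * q^(2*(Suc j choose 2)) * b^(Suc j)) * fps_X^(Suc j) * Pn q (b*q^Suc j) (n-j) = h j"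
      unfolding sc h_def by (simp add: fps_const_mult[symmetric] mult_ac power_Suc del: fps_const_mult)
    finally show ?thesis .
  qed
  have gS: "g (Suc n) = 0" by (simp add: g_def qb_gt)
  have gk: "g k = (fps_const (qb q n k * q^(2*(k choose 2)) * b^k) * fps_X^k * Pn q (b*q^k) (n-k)) * (1 - fps_const c * fps_X)"
    if "k \<le> n" for k
  proof -
    have "Suc n - k = Suc (n-k)" using that by simp
    moreover have "b*q^k*q^(n-k) = c" using that by (simp add: c_def power_add[symmetric])
    ultimately show ?thesis by (simp add: g_def Pn_Suc mult_ac)
  qed
  have "T q (Suc n) b = (\<Sum>k\<le>Suc n. f k)" by (simp add: T_def f_def)
  also have "\<dots> = f 0 + (\<Sum>j\<le>n. f (Suc j))" by (rule sum.atMost_Suc_shift)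
  also have "\<dots> = g 0 + (\<Sum>j\<le>n. g (Suc j)) + (\<Sum>j\<le>n. h j)"
    using fS f0 by (simp add: sum.distrib)
  also have "g 0 + (\<Sum>j\<le>n. g (Suc j)) = (\<Sum>k\<le>Suc n. g k)" by (rule sum.atMost_Suc_shift[symmetric])
  also have "\<dots> = (\<Sum>k\<le>n. g k)" using gS by simp
  also have "\<dots> = T q n b * (1 - fps_const c * fps_X)"
    unfolding T_def sum_distrib_right by (rule sum.cong) (auto simp: gk)
  also have "(\<Sum>j\<le>n. h j) = fps_const c * fps_X * T q n (b*q)"
    unfolding T_def h_def sum_distrib_left by simp
  finally show ?case using Suc.IH by (simp add: algebra_simps)
qed


lemma ID1:
  assumes qnz: "\<And>m. qpoch q q m \<noteq> 0"
  shows "FF q (b*q^n) = (\<Sum>k\<le>n. fps_const (qb q n k * q^(2*(k choose 2)) * b^k) * fps_X^k * FF q (b*q^k))"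
proof -
  have "(\<Sum>k\<le>n. fps_const (qb q n k * q^(2*(k choose 2)) * b^k) * fps_X^k * FF q (b*q^k))
      = (\<Sum>k\<le>n. fps_const (qb q n k * q^(2*(k choose 2)) * b^k) * fps_X^k * Pn q (b*q^k) (n-k)) * FF q (b*q^n)"
    unfolding sum_distrib_right
  proof (rule sum.cong)
    fix k assume "k \<in> {..n}"
    hence e: "b*q^k*q^(n-k) = b*q^n" by (simp add: power_add[symmetric])
    have "FF q (b*q^k) = Pn q (b*q^k) (n-k) * FF q (b*q^n)" using L2[OF qnz, of "b*q^k" "n-k", unfolded e] .
    thus "fps_const (qb q n k * q^(2*(k choose 2)) * b^k) * fps_X^k * FF q (b*q^k) =
      fps_const (qb q n k * q^(2*(k choose 2)) * b^k) * fps_X^k * Pn q (b*q^k) (n-k) * FF q (b*q^n)"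
      by (simp add: mult_ac)
  qed simp
  also have "\<dots> = FF q (b*q^n)" using T_one[OF qnz, of n b] by (simp add: T_def)
  finally show ?thesis by simp
qed

lemma Abs_fps_poly:
  assumes "\<And>k. n < k \<Longrightarrow> a k = 0"
  shows "Abs_fps a = (\<Sum>k\<le>n. fps_const (a k) * fps_X^k)"
proof (rule fps_ext)
  fix m
  show "fps_nth (Abs_fps a) m = fps_nth (\<Sum>k\<le>n. fps_const (a k) * fps_X^k) m"
    using assms[of m] by (cases "m \<le> n") (auto simp: fps_sum_nth mult_delta_right sum.delta sum.delta')
qed

lemma ID2:
  assumes qnz: "\<And>m. qpoch q q m \<noteq> 0" and q0: "q \<noteq> 0"
  shows "FF q (b * q powi (- int n)) = (\<Sum>k\<le>n. fps_const (qb q n k * q powi (int (k choose 2) - int n * int k) * (- b)^k) * fps_X^k * FF q b)"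
proof -
  have e: "b * q powi (- int n) * q^n = b" using q0 by (simp add: power_int_minus field_simps)
  have "FF q (b * q powi (- int n)) = Pn q (b * q powi (- int n)) n * FF q b"
    using L2[OF qnz, of "b * q powi (- int n)" n] e by simp
  also have "Pn q (b * q powi (- int n)) n = (\<Sum>k\<le>n. fps_const (qb q n k * q powi (int (k choose 2) - int n * int k) * (- b)^k) * fps_X^k)"
  proof -
    have sc: "qb q n k * q^(k choose 2) * (-(b * q powi (- int n)))^k = qb q n k * q powi (int (k choose 2) - int n * int k) * (- b)^k" for k
    proof -
      have p1: "(q powi (- int n))^k = q powi (- int n * int k)"
        by (metis power_int_mult power_int_of_nat)
      have p2: "int (k choose 2) - int n * int k = int (k choose 2) + (- int n * int k)" by simp
      have "q powi (int (k choose 2) - int n * int k) = q^(k choose 2) * (q powi (- int n))^k"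
        unfolding p1 by (subst p2, subst power_int_add) (use q0 in auto)
      moreover have "(-(b * q powi (- int n)))^k = (-b)^k * (q powi (- int n))^k"
        by (simp add: power_mult_distrib[symmetric])
      ultimately show ?thesis by (simp only: mult_ac)
    qed
    show ?thesis unfolding qbinomial[OF qnz] sc
      by (rule Abs_fps_poly) (simp add: qb_gt)
  qed
  finally show ?thesis by (simp add: sum_distrib_right)
qed


lemma nth_sum2:
  "fps_nth (fps_nth (\<Sum>k\<in>A. cst (C k) * fpsX^k * P k) m) N =
   (\<Sum>k\<in>A. C k * (if m < k then 0 else fps_nth (fps_nth (P k) (m-k)) N))"
proof -
  have "fps_nth (fps_nth (cst (C k) * fpsX^k * P k) m) N = C k * (if m < k then 0 else fps_nth (fps_nth (P k) (m-k)) N)" for k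
  proof -
    have e: "cst (C k) * fpsX^k * P k = cst (C k) * (fpsX^k * P k)" by (simp add: mult.assoc)
    show ?thesis unfolding e by (cases "m < k") (simp_all add: fps_X_power_mult_nth)
  qed
  thus ?thesis by (simp add: fps_sum_nth)
qed

lemma assemble:
  assumes qnz: "\<And>m. qpoch q q m \<noteq> 0" and cnz: "\<And>m. qpoch c q m \<noteq> 0"
    and ID: "\<And>m. G q B m = (\<Sum>k\<in>{0..n}. d k * (if m < k then 0 else G q (bb k) (m-k)))"
  shows "qAppell1 q a B b' c = (\<Sum>k=0..n. cst (d k * qpoch a q k / qpoch c q k) * fpsX^k * qAppell1 q (a*q^k) (bb k) b' (c*q^k))"
proof (rule fps_ext, rule fps_ext)
  fix m N
  define W where "W = qpoch a q (m+N) * qpoch b' q N / (qpoch q q N * qpoch c q (m+N))"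
  have "fps_nth (fps_nth (\<Sum>k=0..n. cst (d k * qpoch a q k / qpoch c q k) * fpsX^k * qAppell1 q (a*q^k) (bb k) b' (c*q^k)) m) N
     = (\<Sum>k\<in>{0..n}. W * (d k * (if m < k then 0 else G q (bb k) (m-k))))"
    unfolding nth_sum2
  proof (rule sum.cong)
    fix k assume "k \<in> {0..n}"
    show "d k * qpoch a q k / qpoch c q k * (if m < k then 0 else fps_nth (fps_nth (qAppell1 q (a*q^k) (bb k) b' (c*q^k)) (m-k)) N)
       = W * (d k * (if m < k then 0 else G q (bb k) (m-k)))"
    proof (cases "m < k")
      case True thus ?thesis by simp
    next
      case False
      hence mk: "m + N = k + (m - k + N)" by simp
      have ea: "qpoch a q (m+N) = qpoch a q k * qpoch (a*q^k) q (m-k+N)"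
        by (subst mk) (rule qpoch_add)
      have ec: "qpoch c q (m+N) = qpoch c q k * qpoch (c*q^k) q (m-k+N)"
        by (subst mk) (rule qpoch_add)
      have n1: "qpoch c q k \<noteq> 0" "qpoch (c*q^k) q (m-k+N) \<noteq> 0"
        using cnz[of "m+N"] unfolding ec by auto
      have n2: "qpoch q q (m-k) \<noteq> 0" "qpoch q q N \<noteq> 0" using qnz by auto
      show ?thesis unfolding W_def ea ec using False n1 n2
        by (simp add: qAppell1_def G_def field_simps)
    qed
  qed simp
  also have "\<dots> = W * G q B m" by (simp add: ID sum_distrib_left)
  also have "\<dots> = fps_nth (fps_nth (qAppell1 q a B b' c) m) N"
    using qnz[of m] by (simp add: W_def G_def qAppell1_def field_simps)
  finally show "fps_nth (fps_nth (qAppell1 q a B b' c) m) N =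
     fps_nth (fps_nth (\<Sum>k=0..n. cst (d k * qpoch a q k / qpoch c q k) * fpsX^k * qAppell1 q (a*q^k) (bb k) b' (c*q^k)) m) N"
    by simp
qed

theorem theorem4:
  fixes q a b b' c :: complex and n :: nat
  assumes "0 < norm q" and "norm q < 1"
    and "\<And>m. qpoch c q m \<noteq> 0"
  shows "qAppell1 q a (b * q ^ n) b' c =
           (\<Sum>k = 0..n. cst (qbinom q n k * q ^ (2 * (k choose 2)) * b ^ k * qpoch a q k / qpoch c q k)
                         * fpsX ^ k * qAppell1 q (a * q ^ k) (b * q ^ k) b' (c * q ^ k)) \<and>
         qAppell1 q a (b * q powi (- int n)) b' c =
           (\<Sum>k = 0..n. cst (qbinom q n k * q powi (int (k choose 2) - int n * int k) * (- b) ^ k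
                              * qpoch a q k / qpoch c q k)
                         * fpsX ^ k * qAppell1 q (a * q ^ k) b b' (c * q ^ k))"
proof
  have qnz: "\<And>m. qpoch q q m \<noteq> 0" using assms(2) by (rule qqpoch_nz)
  have q0: "q \<noteq> 0" using assms(1) by auto
  show "qAppell1 q a (b * q ^ n) b' c =
           (\<Sum>k = 0..n. cst (qbinom q n k * q ^ (2 * (k choose 2)) * b ^ k * qpoch a q k / qpoch c q k)
                         * fpsX ^ k * qAppell1 q (a * q ^ k) (b * q ^ k) b' (c * q ^ k))"
  proof (rule assemble[OF qnz assms(3)])
    fix m
    have "G q (b*q^n) m = fps_nth (FF q (b*q^n)) m" by (simp add: FF_def)
    also have "\<dots> = (\<Sum>k\<le>n. qb q n k * q^(2*(k choose 2)) * b^k * (if m < k then 0 else G q (b*q^k) (m-k)))"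
      by (subst ID1[OF qnz]) (simp add: fps_sum_nth mult.assoc fps_X_power_mult_nth cong: if_cong)
    also have "\<dots> = (\<Sum>k\<in>{0..n}. qbinom q n k * q^(2*(k choose 2)) * b^k * (if m < k then 0 else G q (b*q^k) (m-k)))"
      by (simp add: atLeast0AtMost qb_def)
    finally show "G q (b*q^n) m = (\<Sum>k\<in>{0..n}. qbinom q n k * q^(2*(k choose 2)) * b^k * (if m < k then 0 else G q (b*q^k) (m-k)))" .
  qed
  show "qAppell1 q a (b * q powi (- int n)) b' c =
           (\<Sum>k = 0..n. cst (qbinom q n k * q powi (int (k choose 2) - int n * int k) * (- b) ^ k
                              * qpoch a q k / qpoch c q k)
                         * fpsX ^ k * qAppell1 q (a * q ^ k) b b' (c * q ^ k))"
  proof (rule assemble[OF qnz assms(3)])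
    fix m
    have "G q (b * q powi (- int n)) m = fps_nth (FF q (b * q powi (- int n))) m" by (simp add: FF_def)
    also have "\<dots> = (\<Sum>k\<le>n. qb q n k * q powi (int (k choose 2) - int n * int k) * (- b)^k * (if m < k then 0 else G q b (m-k)))"
      by (subst ID2[OF qnz q0]) (simp add: fps_sum_nth mult.assoc fps_X_power_mult_nth cong: if_cong)
    also have "\<dots> = (\<Sum>k\<in>{0..n}. qbinom q n k * q powi (int (k choose 2) - int n * int k) * (- b)^k * (if m < k then 0 else G q b (m-k)))"
      by (simp add: atLeast0AtMost qb_def)
    finally show "G q (b * q powi (- int n)) m = (\<Sum>k\<in>{0..n}. qbinom q n k * q powi (int (k choose 2) - int n * int k) * (- b)^k * (if m < k then 0 else G q b (m-k)))" .
  qed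
qed

end
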